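(* Let $0<c\le a_2$. Any partial listing $\phi$ of $A$ becomes $K_c$-connected after at most $c-2$ further calls to Next$(\varnothing)$.
   Context: Let $k\ge 2$ and let $a_k,\dots,a_2$ be positive integers with $a_2\le a_i$ for all $2<i\le k$. Let $A=[a_k]\times\cdots\times[a_2]$, where $[a]=\{0,\dots,a-1\}$; elements are written $\alpha=\alpha_k\alpha_{k-1}\cdots\alpha_2$. A prefix of $\alpha$ is $\alpha_k\cdots\alpha_{l+1}$ for some $2\le l+1\le k$; $\varnothing$ denotes the empty prefix; for a tuple $\beta=\alpha_k\cdots\alpha_{l+1}$ and $i$, $\beta i$ denotes $\alpha_k\cdots\alpha_{l+1}i$. An array $\phi:A\to\{0,1\}$ is initialized to $0$ everywhere. A tuple $\beta$ (a prefix or an element) is non-empty if some $\alpha\in A$ having $\beta$ as a prefix (or equal to $\beta$) has $\phi(\alpha)=1$, empty otherwise, and full if all such $\alpha$ have $\phi(\alpha)=1$. The procedure Next$(\beta)$, for $\beta=\alpha_k\cdots\alpha_{l+1}$ (with $l=k$ for $\beta=\varnothing$): let $m$ be the least $i$ such that $\beta i$ is empty; if $l=2$, set $\phi(\beta m):=1$ and stop; otherwise, if $m\ge a_2$, replace $m$ by the least $i$ such that $\beta i$ is not full; then call Next$(\beta m)$. A partial listing of $A$ is an array $\phi$ obtained from the all-zero array by finitely many calls of Next$(\varnothing)$. For $0<c\le a_2$, a partial listing $\phi$ is $K_c$-connected if for every prefix $\alpha'$ (for which $\alpha'1$ is defined), whenever $\alpha'1$ is non-empty, $\alpha'(c-1)$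 is also non-empty. *)

theory Defs
  imports Main
begin

(* Tuples alpha = alpha_k ... alpha_2 are lists [alpha_k, ..., alpha_2];
   list position t holds coordinate k - t, which ranges over [a (k - t)] = {0..<a (k-t)}.
   A prefix beta = alpha_k ... alpha_{l+1} is a list of length k - l;
   the next coordinate appended to it is coordinate l = k - length beta.
   The array phi : A -> {0,1} is modelled as a predicate on lists (True = 1). *)

definition elemA :: "nat \<Rightarrow> (nat \<Rightarrow> nat) \<Rightarrow> nat list set" where
  "elemA k a = {al. length al = k - 1 \<and> (\<forall>t < k - 1. al ! t < a (k - t))}"

definition is_prefix :: "nat \<Rightarrow> (nat \<Rightarrow> nat) \<Rightarrow> nat list \<Rightarrow> bool" where
  "is_prefix k a beta = (\<exists>al \<in> elemA k a. take (length beta) al = beta)"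

definition nonempty :: "nat \<Rightarrow> (nat \<Rightarrow> nat) \<Rightarrow> (nat list \<Rightarrow> bool) \<Rightarrow> nat list \<Rightarrow> bool" where
  "nonempty k a phi beta = (\<exists>al \<in> elemA k a. take (length beta) al = beta \<and> phi al)"

definition full :: "nat \<Rightarrow> (nat \<Rightarrow> nat) \<Rightarrow> (nat list \<Rightarrow> bool) \<Rightarrow> nat list \<Rightarrow> bool" where
  "full k a phi beta = (\<forall>al \<in> elemA k a. take (length beta) al = beta \<longrightarrow> phi al)"

(* nxt k a d beta phi = Next(beta), where beta has length k - (d + 2), i.e. l = d + 2.
   "least i such that beta i is empty": since beta i with i >= a_l is never non-empty,
   this LEAST equals a_l exactly when all beta i (i in [a_l]) are non-empty. *)
primrec nxt :: "nat \<Rightarrow> (nat \<Rightarrow> nat) \<Rightarrow> nat \<Rightarrow> nat list \<Rightarrow> (nat list \<Rightarrow> bool) \<Rightarrow> (nat list \<Rightarrow> bool)" where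
  "nxt k a 0 beta phi = phi(beta @ [LEAST i. \<not> nonempty k a phi (beta @ [i])] := True)"
| "nxt k a (Suc d) beta phi =
     (let m = (LEAST i. \<not> nonempty k a phi (beta @ [i]));
          m' = (if a 2 \<le> m then (LEAST i. \<not> full k a phi (beta @ [i])) else m)
      in nxt k a d (beta @ [m']) phi)"

definition next_empty :: "nat \<Rightarrow> (nat \<Rightarrow> nat) \<Rightarrow> (nat list \<Rightarrow> bool) \<Rightarrow> (nat list \<Rightarrow> bool)" where
  "next_empty k a phi = nxt k a (k - 2) [] phi"

(* a call of Next(empty) is only possible while A is not completely listed *)
definition partial_listing :: "nat \<Rightarrow> (nat \<Rightarrow> nat) \<Rightarrow> (nat list \<Rightarrow> bool) \<Rightarrow> bool" where
  "partial_listing k a phi =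
     (\<exists>n. phi = (next_empty k a ^^ n) (\<lambda>_. False) \<and>
          (\<forall>i < n. \<not> full k a ((next_empty k a ^^ i) (\<lambda>_. False)) []))"

definition Kc_connected :: "nat \<Rightarrow> (nat \<Rightarrow> nat) \<Rightarrow> nat \<Rightarrow> (nat list \<Rightarrow> bool) \<Rightarrow> bool" where
  "Kc_connected k a c phi =
     (\<forall>beta. is_prefix k a beta \<and> length beta < k - 1 \<and> 1 < a (k - length beta) \<longrightarrow>
        nonempty k a phi (beta @ [1]) \<longrightarrow> nonempty k a phi (beta @ [c - 1]))"

end

theory Submission
  imports Defs
begin


definition chs :: "nat \<Rightarrow> (nat \<Rightarrow> nat) \<Rightarrow> (nat list \<Rightarrow> bool) \<Rightarrow> nat \<Rightarrow> nat list \<Rightarrow> nat" where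
 "chs k a phi d beta = (if d = 0 then (LEAST i. \<not> nonempty k a phi (beta @ [i]))
    else (if a 2 \<le> (LEAST i. \<not> nonempty k a phi (beta @ [i])) then (LEAST i. \<not> full k a phi (beta @ [i]))
          else (LEAST i. \<not> nonempty k a phi (beta @ [i]))))"

primrec pth :: "nat \<Rightarrow> (nat \<Rightarrow> nat) \<Rightarrow> nat \<Rightarrow> nat list \<Rightarrow> (nat list \<Rightarrow> bool) \<Rightarrow> nat list" where
  "pth k a 0 beta phi = beta @ [chs k a phi 0 beta]"
| "pth k a (Suc d) beta phi = pth k a d (beta @ [chs k a phi (Suc d) beta]) phi"

lemma nxt_pth: "nxt k a d beta phi = phi(pth k a d beta phi := True)"
  by (induction d arbitrary: beta) (simp_all add: chs_def Let_def)

lemma pth_len: "length (pth k a d beta phi) = length beta + d + 1"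
  by (induction d arbitrary: beta) auto

lemma pth_take: "take (length beta) (pth k a d beta phi) = beta"
proof (induction d arbitrary: beta)
  case 0 then show ?case by simp
next
  case (Suc d)
  let ?b = "beta @ [chs k a phi (Suc d) beta]"
  have "take (length beta) (pth k a d ?b phi) = take (length beta) (take (length ?b) (pth k a d ?b phi))"
    by simp
  also have "\<dots> = beta" using Suc[of ?b] by simp
  finally show ?case by simp
qed

lemma pth_step: "i \<le> d \<Longrightarrow> take (length beta + i + 1) (pth k a d beta phi) =
   take (length beta + i) (pth k a d beta phi) @ [chs k a phi (d - i) (take (length beta + i) (pth k a d beta phi))]"
proof (induction d arbitrary: beta i)
  case 0 then show ?case by simp
next
  case (Suc d)
  let ?b = "beta @ [chs k a phi (Suc d) beta]"
  show ?case
  proof (cases i)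
    case 0
    have t1: "take (length beta + 1) (pth k a d ?b phi) = ?b" using pth_take[of ?b] by simp
    have t2: "take (length beta) (pth k a d ?b phi) = beta" using pth_take[of beta k a "Suc d" phi] by simp
    show ?thesis using 0 t1 t2 by simp
  next
    case (Suc i')
    with Suc.prems have "i' \<le> d" by simp
    from Suc.IH[OF this, of ?b] show ?thesis using Suc by simp
  qed
qed

lemma ex_empty: "\<exists>N. \<not> nonempty k a phi (g @ [N])"
proof
  show "\<not> nonempty k a phi (g @ [a (k - length g)])"
  proof
    assume "nonempty k a phi (g @ [a (k - length g)])"
    then obtain al where al: "al \<in> elemA k a" "take (length g + 1) al = g @ [a (k - length g)]"
      unfolding nonempty_def by auto
    from al have len: "length al = k - 1" and bd: "\<forall>t<k-1. al ! t < a (k - t)" unfolding elemA_def by auto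
    from al(2) have "length (take (length g + 1) al) = length g + 1" by simp
    then have lt: "length g < k - 1" using len by simp
    have "al ! length g = (take (length g + 1) al) ! length g" by simp
    also have "\<dots> = a (k - length g)" using al(2) by (simp add: nth_append)
    finally show False using bd lt by fastforce
  qed
qed

lemma least_ge: "(\<exists>i. \<not> P i) \<Longrightarrow> (\<forall>i<m. P i) \<Longrightarrow> m \<le> (LEAST i. \<not> P (i::nat))"
  by (metis LeastI_ex not_le)

lemma ne_mono: "nonempty k a phi g \<Longrightarrow> nonempty k a (phi(x := True)) g"
  unfolding nonempty_def by auto
lemma full_mono: "full k a phi g \<Longrightarrow> full k a (phi(x := True)) g"
  unfolding full_def by auto




lemma root_len: "2 \<le> k \<Longrightarrow> length (pth k a (k-2) [] phi) = k - 1"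
  by (simp add: pth_len)

lemma root_nth: assumes "2 \<le> k" "i < k - 1"
  shows "pth k a (k-2) [] phi ! i = chs k a phi (k-2-i) (take i (pth k a (k-2) [] phi))"
proof -
  let ?x = "pth k a (k-2) [] phi"
  have "i \<le> k - 2" using assms by simp
  from pth_step[OF this, of "[]" k a phi] have
    s: "take (i + 1) ?x = take i ?x @ [chs k a phi (k-2-i) (take i ?x)]" by simp
  have "i < length ?x" using assms root_len by simp
  then have "take (i+1) ?x = take i ?x @ [?x ! i]" by (simp add: take_Suc_conv_app_nth)
  with s show ?thesis by simp
qed

lemma next_empty_eq: "next_empty k a phi = phi(pth k a (k-2) [] phi := True)"
  unfolding next_empty_def by (rule nxt_pth)

definition A1 where "A1 k a phi = (\<forall>g. nonempty k a phi (g@[1]) \<longrightarrow> nonempty k a phi (g@[0]))"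

definition heavy where "heavy k a phi d = (\<exists>al1\<in>elemA k a. \<exists>al2\<in>elemA k a. al1 \<noteq> al2 \<and>
   take (length d) al1 = d \<and> take (length d) al2 = d \<and> phi al1 \<and> phi al2)"

definition HH where "HH k a phi = (\<forall>g j. heavy k a phi (g@[j]) \<and> \<not> full k a phi (g@[j]) \<longrightarrow>
   (\<forall>i<a 2. nonempty k a phi (g@[i])) \<and> (\<forall>i<j. full k a phi (g@[i])))"

lemma chs_pos: "chs k a phi d g \<noteq> 0 \<Longrightarrow> 0 < a 2 \<Longrightarrow> 0 < (LEAST i. \<not> nonempty k a phi (g@[i]))"
  unfolding chs_def by (auto split: if_splits)

lemma elem_take_nth: assumes "x \<in> elemA k a" "take (length g + 1) x = g @ [j]"
  shows "length g < k - 1" "take (length g) x = g" "x ! length g = j"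
proof -
  have len: "length x = k - 1" using assms(1) unfolding elemA_def by auto
  from assms(2) have "length (take (length g + 1) x) = length g + 1" by simp
  then show lt: "length g < k - 1" using len by simp
  show "take (length g) x = g" using arg_cong[OF assms(2), of "take (length g)"] by simp
  have "(take (length g + 1) x) ! length g = x ! length g" by simp
  then show "x ! length g = j" using assms(2) by (metis nth_append_length)
qed

lemma A1_pres: assumes "2 \<le> k" "0 < a 2" "A1 k a phi" shows "A1 k a (next_empty k a phi)"
  unfolding A1_def
proof (intro allI impI)
  fix g
  let ?x = "pth k a (k-2) [] phi"
  assume h: "nonempty k a (next_empty k a phi) (g @ [1])"
  show "nonempty k a (next_empty k a phi) (g @ [0])"
  proof (cases "nonempty k a phi (g @ [1])")
    case True
    then show ?thesis using assms(3) unfolding A1_def next_empty_eq by (auto intro: ne_mono)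
  next
    case False
    from h obtain al where al: "al \<in> elemA k a" "take (length g + 1) al = g @ [1]" "next_empty k a phi al"
      unfolding nonempty_def by auto
    have "al = ?x"
    proof (rule ccontr)
      assume "al \<noteq> ?x"
      then have "phi al" using al(3) unfolding next_empty_eq by simp
      then have "nonempty k a phi (g @ [1])" using al(1,2) unfolding nonempty_def by auto
      then show False using False by simp
    qed
    with al have xa: "?x \<in> elemA k a" "take (length g + 1) ?x = g @ [1]" by auto
    note e = elem_take_nth[OF xa]
    have "chs k a phi (k-2-length g) g = 1" using root_nth[OF assms(1) e(1), of a phi] e by simp
    then have "0 < (LEAST i. \<not> nonempty k a phi (g@[i]))" using chs_pos[of k a phi "k-2-length g" g] assms(2) by simp
    then have "nonempty k a phi (g@[0])" using not_less_Least by blast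
    then show ?thesis unfolding next_empty_eq by (rule ne_mono)
  qed
qed

lemma heavy_len: "heavy k a phi d \<Longrightarrow> length d < k - 1"
proof (rule ccontr)
  assume h: "heavy k a phi d" and n: "\<not> length d < k - 1"
  from h obtain al1 al2 where "al1 \<in> elemA k a" "al2 \<in> elemA k a" "al1 \<noteq> al2"
    "take (length d) al1 = d" "take (length d) al2 = d" unfolding heavy_def by blast
  moreover have "length al1 = k - 1" "length al2 = k - 1" using calculation(1,2) unfolding elemA_def by auto
  ultimately show False using n by simp
qed

lemma HH_pres: assumes "2 \<le> k" "HH k a phi" shows "HH k a (next_empty k a phi)"
  unfolding HH_def
proof (intro allI impI)
  fix g j
  let ?x = "pth k a (k-2) [] phi"
  let ?p = "next_empty k a phi"
  assume h: "heavy k a ?p (g @ [j]) \<and> \<not> full k a ?p (g @ [j])"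
  have nf: "\<not> full k a phi (g @ [j])" using h full_mono unfolding next_empty_eq by blast
  show "(\<forall>i<a 2. nonempty k a ?p (g @ [i])) \<and> (\<forall>i<j. full k a ?p (g @ [i]))"
  proof (cases "heavy k a phi (g @ [j])")
    case True
    with nf assms(2) have "(\<forall>i<a 2. nonempty k a phi (g @ [i])) \<and> (\<forall>i<j. full k a phi (g @ [i]))"
      unfolding HH_def by blast
    then show ?thesis unfolding next_empty_eq using ne_mono full_mono by blast
  next
    case False
    from h obtain al1 al2 where al: "al1 \<in> elemA k a" "al2 \<in> elemA k a" "al1 \<noteq> al2"
      "take (length g + 1) al1 = g @ [j]" "take (length g + 1) al2 = g @ [j]" "?p al1" "?p al2"
      unfolding heavy_def by auto
    have "(al1 = ?x \<and> phi al2) \<or> (al2 = ?x \<and> phi al1)"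
    proof (cases "al1 = ?x")
      case True
      then have "al2 \<noteq> ?x" using al(3) by simp
      then show ?thesis using True al(7) unfolding next_empty_eq by simp
    next
      case F: False
      then have p1: "phi al1" using al(6) unfolding next_empty_eq by simp
      show ?thesis
      proof (cases "al2 = ?x")
        case True then show ?thesis using p1 by simp
      next
        case F2: False
        then have "phi al2" using al(7) unfolding next_empty_eq by simp
        then have "heavy k a phi (g @ [j])" using p1 al(1-5) unfolding heavy_def by auto
        then show ?thesis using \<open>\<not> heavy k a phi (g @ [j])\<close> by simp
      qed
    qed
    then obtain y where y: "y \<in> elemA k a" "take (length g + 1) y = g @ [j]" "phi y"
      and xa: "?x \<in> elemA k a" "take (length g + 1) ?x = g @ [j]" using al by blast
    have nej: "nonempty k a phi (g @ [j])" using y unfolding nonempty_def by auto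
    have lt: "length g < k - 2" using heavy_len[OF conjunct1[OF h]] by simp
    note e = elem_take_nth[OF xa]
    have cj: "chs k a phi (k-2-length g) g = j" using root_nth[OF assms(1) e(1), of a phi] e by simp
    let ?m = "LEAST i. \<not> nonempty k a phi (g@[i])"
    have m_em: "\<not> nonempty k a phi (g@[?m])" using LeastI_ex[OF ex_empty] by blast
    have "k - 2 - length g \<noteq> 0" using lt by simp
    then have cj': "(if a 2 \<le> ?m then (LEAST i. \<not> full k a phi (g @ [i])) else ?m) = j"
      using cj unfolding chs_def by simp
    have am: "a 2 \<le> ?m"
    proof (rule ccontr)
      assume "\<not> a 2 \<le> ?m"
      then have "j = ?m" using cj' by simp
      then show False using m_em nej by simp
    qed
    have "\<forall>i<a 2. nonempty k a phi (g @ [i])"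
    proof (intro allI impI)
      fix i assume "i < a 2"
      then have "i < ?m" using am by simp
      then show "nonempty k a phi (g @ [i])" using not_less_Least[of i "\<lambda>i. \<not> nonempty k a phi (g@[i])"] by simp
    qed
    moreover have "\<forall>i<j. full k a phi (g @ [i])"
    proof (intro allI impI)
      fix i assume "i < j"
      then have "i < (LEAST i. \<not> full k a phi (g @ [i]))" using cj' am by simp
      then show "full k a phi (g @ [i])" using not_less_Least[of i "\<lambda>i. \<not> full k a phi (g@[i])"] by simp
    qed
    ultimately show ?thesis unfolding next_empty_eq using ne_mono full_mono by blast
  qed
qed

lemma inv_zero: "A1 k a (\<lambda>_. False)" "HH k a (\<lambda>_. False)"
  unfolding A1_def HH_def heavy_def nonempty_def by auto




definition bad where "bad k a c phi b = (is_prefix k a b \<and> length b < k - 1 \<and> 1 < a (k - length b) \<and>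
   nonempty k a phi (b@[1]) \<and> \<not> nonempty k a phi (b@[c-1]))"

definition mu where "mu k a phi b = (LEAST i. \<not> nonempty k a phi (b@[i]))"

lemma Kc_bad: "Kc_connected k a c phi \<longleftrightarrow> \<not> (\<exists>b. bad k a c phi b)"
  unfolding Kc_connected_def bad_def by blast

context
  fixes k :: nat and a :: "nat \<Rightarrow> nat" and c :: nat
  assumes k2: "2 \<le> k" and apos: "\<forall>i. 2 \<le> i \<and> i \<le> k \<longrightarrow> 0 < a i"
    and amono: "\<forall>i. 2 < i \<and> i \<le> k \<longrightarrow> a 2 \<le> a i" and c3: "3 \<le> c" and ca: "c \<le> a 2"
begin

lemma coord_bound: "t < k - 1 \<Longrightarrow> c - 1 < a (k - t)"
proof -
  assume t: "t < k - 1"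
  show ?thesis
  proof (cases "k - t = 2")
    case True then show ?thesis using ca c3 by simp
  next
    case False
    then have "a 2 \<le> a (k - t)" using amono t by simp
    then show ?thesis using ca c3 by simp
  qed
qed

lemma take_ext: "take (length b + 1) al = b @ [j] \<Longrightarrow> i \<le> length b \<Longrightarrow> take i al = take i b"
proof -
  assume h: "take (length b + 1) al = b @ [j]" "i \<le> length b"
  have "take i al = take i (take (length b + 1) al)" using h(2) by simp
  also have "\<dots> = take i (b @ [j])" using h(1) by simp
  also have "\<dots> = take i b" using h(2) by simp
  finally show ?thesis .
qed

lemma path:
  assumes inv: "A1 k a phi" "HH k a phi" and bd: "bad k a c phi b"
  defines "x \<equiv> pth k a (k-2) [] phi"
  shows "take (length b) x = b" "x ! length b = mu k a phi b"
    "\<forall>i. length b < i \<and> i < k - 1 \<longrightarrow> x ! i = 0" "x \<in> elemA k a"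
proof -
  from bd have pre: "is_prefix k a b" and lb: "length b < k - 1" and ne1: "nonempty k a phi (b@[1])"
    and ncm: "\<not> nonempty k a phi (b@[c-1])" unfolding bad_def by auto
  have ne0: "nonempty k a phi (b@[0])" using inv(1) ne1 unfolding A1_def by blast
  from pre obtain al0 where al0: "al0 \<in> elemA k a" "take (length b) al0 = b" unfolding is_prefix_def by auto
  have len0: "length al0 = k - 1" and bd0: "\<forall>t<k-1. al0 ! t < a (k - t)" using al0 unfolding elemA_def by auto
  define al' where "al' = al0[length b := c - 1]"
  have al'A: "al' \<in> elemA k a" unfolding elemA_def al'_def using len0 bd0 coord_bound lb
    by (auto simp: nth_list_update)
  have tal': "take (length b + 1) al' = b @ [c-1]"
    unfolding al'_def using al0(2) lb len0 by (simp add: take_Suc_conv_app_nth)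
  have npal': "\<not> phi al'" using ncm al'A tal' unfolding nonempty_def by auto
  from ne0 obtain u0 where u0: "u0 \<in> elemA k a" "take (length b + 1) u0 = b @ [0]" "phi u0"
    unfolding nonempty_def by auto
  from ne1 obtain u1 where u1: "u1 \<in> elemA k a" "take (length b + 1) u1 = b @ [1]" "phi u1"
    unfolding nonempty_def by auto
  have "u0 ! length b = 0" "u1 ! length b = 1" using elem_take_nth u0 u1 by blast+
  then have u01: "u0 \<noteq> u1" by auto
  have lx: "length x = k - 1" unfolding x_def using root_len k2 by simp
  have xs: "x ! i = chs k a phi (k-2-i) (take i x)" if "i < k - 1" for i
    unfolding x_def using root_nth[OF k2 that] .
  have tx: "i < k - 1 \<Longrightarrow> take (Suc i) x = take i x @ [chs k a phi (k-2-i) (take i x)]" for i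
    using xs lx by (simp add: take_Suc_conv_app_nth)
  have P: "i \<le> length b \<Longrightarrow> take i x = take i b" for i
  proof (induction i)
    case 0 then show ?case by simp
  next
    case (Suc i)
    then have il: "i < length b" by simp
    let ?g = "take i b" let ?j = "b ! i"
    have gj: "take (Suc i) b = ?g @ [?j]" using il by (simp add: take_Suc_conv_app_nth)
    have lg: "length ?g = i" using il by simp
    have hv: "heavy k a phi (?g @ [?j])" unfolding heavy_def
      using u0 u1 u01 take_ext[OF u0(2), of "Suc i"] take_ext[OF u1(2), of "Suc i"] il gj lg
      by (metis Suc_leI length_append_singleton)
    have nfl: "\<not> full k a phi (?g @ [?j])" unfolding full_def
      using al'A npal' take_ext[OF tal', of "Suc i"] il gj lg
      by (metis Suc_leI length_append_singleton)
    from inv(2) hv nfl have H1: "\<forall>i'<a 2. nonempty k a phi (?g @ [i'])"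
      and H2: "\<forall>i'<?j. full k a phi (?g @ [i'])" unfolding HH_def by blast+
    let ?m = "LEAST i. \<not> nonempty k a phi (?g@[i])"
    have am: "a 2 \<le> ?m" using least_ge[OF ex_empty] H1 by blast
    have lf: "(LEAST i. \<not> full k a phi (?g @ [i])) = ?j"
      by (rule Least_equality) (use nfl H2 in \<open>auto simp: not_le[symmetric]\<close>)
    have "k - 2 - i \<noteq> 0" using il lb by simp
    then have "chs k a phi (k-2-i) ?g = ?j" unfolding chs_def using am lf by simp
    then show ?case using tx[of i] il lb Suc gj by simp
  qed
  show tb: "take (length b) x = b" using P[of "length b"] by simp
  have mle: "mu k a phi b \<le> c - 1" unfolding mu_def using ncm by (simp add: Least_le)
  have "chs k a phi (k-2-length b) b = mu k a phi b"
    using mle ca c3 unfolding chs_def mu_def by auto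
  then show xb: "x ! length b = mu k a phi b" using xs[OF lb] tb by simp
  have emp: "\<not> nonempty k a phi (b @ [mu k a phi b])" unfolding mu_def using LeastI_ex[OF ex_empty] by blast
  show below: "\<forall>i. length b < i \<and> i < k - 1 \<longrightarrow> x ! i = 0"
  proof (intro allI impI)
    fix i assume i: "length b < i \<and> i < k - 1"
    let ?g = "take i x"
    have tg: "take (length b + 1) ?g = b @ [mu k a phi b]"
      using i tb xb lx by (simp add: take_Suc_conv_app_nth min_def)
    have "\<not> nonempty k a phi (?g @ [0])"
    proof
      assume "nonempty k a phi (?g @ [0])"
      then obtain al where al: "al \<in> elemA k a" "take (length ?g + 1) al = ?g @ [0]" "phi al"
        unfolding nonempty_def by auto
      have "take (length b + 1) al = take (length b + 1) (?g @ [0])"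
        using arg_cong[OF al(2), of "take (length b + 1)"] i lx by (simp add: min_def)
      also have "\<dots> = b @ [mu k a phi b]" using tg i lx by simp
      finally show False using emp al(1,3) unfolding nonempty_def by auto
    qed
    then have l0: "(LEAST i. \<not> nonempty k a phi (?g @ [i])) = 0" by (simp add: Least_equality)
    have "chs k a phi (k-2-i) ?g = 0" unfolding chs_def l0 using ca c3 by simp
    then show "x ! i = 0" using xs i by simp
  qed
  show "x \<in> elemA k a" unfolding elemA_def
  proof (intro CollectI conjI allI impI)
    show "length x = k - 1" by (rule lx)
    fix t assume t: "t < k - 1"
    consider "t < length b" | "t = length b" | "length b < t" by linarith
    then show "x ! t < a (k - t)"
    proof cases
      case 1
      have "x ! t = take (length b) x ! t" using 1 by simp
      also have "\<dots> = al0 ! t" using tb al0(2) 1 nth_take by metis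
      finally show ?thesis using bd0 t by simp
    next
      case 2 then show ?thesis using xb mle coord_bound[OF t] by simp
    next
      case 3 then show ?thesis using below t apos by simp
    qed
  qed
qed

end



context
  fixes k :: nat and a :: "nat \<Rightarrow> nat" and c :: nat
  assumes k2: "2 \<le> k" and apos: "\<forall>i. 2 \<le> i \<and> i \<le> k \<longrightarrow> 0 < a i"
    and amono: "\<forall>i. 2 < i \<and> i \<le> k \<longrightarrow> a 2 \<le> a i" and c3: "3 \<le> c" and ca: "c \<le> a 2"
begin

lemma bad_notfull: assumes "bad k a c phi b" shows "\<not> full k a phi []"
proof -
  from assms have pre: "is_prefix k a b" and lb: "length b < k - 1"
    and ncm: "\<not> nonempty k a phi (b@[c-1])" unfolding bad_def by auto
  from pre obtain al0 where al0: "al0 \<in> elemA k a" "take (length b) al0 = b" unfolding is_prefix_def by auto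
  have len0: "length al0 = k - 1" and bd0: "\<forall>t<k-1. al0 ! t < a (k - t)" using al0 unfolding elemA_def by auto
  define al' where "al' = al0[length b := c - 1]"
  have al'A: "al' \<in> elemA k a" unfolding elemA_def al'_def
    using len0 bd0 coord_bound[OF k2 apos amono c3 ca] lb
    by (auto simp: nth_list_update)
  have tal': "take (length b + 1) al' = b @ [c-1]"
    unfolding al'_def using al0(2) lb len0 by (simp add: take_Suc_conv_app_nth)
  have npal': "\<not> phi al'" using ncm al'A tal' unfolding nonempty_def by auto
  then show ?thesis using al'A unfolding full_def by auto
qed

lemma bad_mu: assumes "A1 k a phi" "bad k a c phi b" shows "2 \<le> mu k a phi b" "mu k a phi b < c"
proof -
  from assms have ne1: "nonempty k a phi (b@[1])" and ncm: "\<not> nonempty k a phi (b@[c-1])"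
    unfolding bad_def by auto
  have ne0: "nonempty k a phi (b@[0])" using assms(1) ne1 unfolding A1_def by blast
  have "\<forall>i<2. nonempty k a phi (b@[i])" using ne0 ne1 by (auto simp: less_2_cases_iff)
  then show "2 \<le> mu k a phi b" unfolding mu_def using least_ge[OF ex_empty] by blast
  have "mu k a phi b \<le> c - 1" unfolding mu_def using ncm by (simp add: Least_le)
  then show "mu k a phi b < c" using c3 by simp
qed

lemma step:
  assumes inv: "A1 k a phi" "HH k a phi" and b0: "bad k a c phi b0"
    and G: "\<forall>b. bad k a c phi b \<longrightarrow> s \<le> mu k a phi b"
    and b': "bad k a c (next_empty k a phi) b'"
  shows "s + 1 \<le> mu k a (next_empty k a phi) b'"
proof -
  let ?x = "pth k a (k-2) [] phi"
  let ?p = "next_empty k a phi"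
  note P0 = path[OF k2 apos amono c3 ca inv b0]
  have lx: "length ?x = k - 1" using root_len k2 by simp
  from b' have pre: "is_prefix k a b'" and lb: "length b' < k - 1" and aa: "1 < a (k - length b')"
    and ne1': "nonempty k a ?p (b'@[1])" and ncm': "\<not> nonempty k a ?p (b'@[c-1])" unfolding bad_def by auto
  have ncm: "\<not> nonempty k a phi (b'@[c-1])" using ncm' ne_mono unfolding next_empty_eq by blast
  have ne1: "nonempty k a phi (b'@[1])"
  proof (rule ccontr)
    assume nn: "\<not> nonempty k a phi (b'@[1])"
    from ne1' obtain al where al: "al \<in> elemA k a" "take (length b' + 1) al = b' @ [1]" "?p al"
      unfolding nonempty_def by auto
    have "al = ?x"
    proof (rule ccontr)
      assume "al \<noteq> ?x"
      then have "phi al" using al(3) unfolding next_empty_eq by simp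
      then show False using nn al(1,2) unfolding nonempty_def by auto
    qed
    with al have xt: "take (length b' + 1) ?x = b' @ [1]" by simp
    have xb1: "?x ! length b' = 1" using elem_take_nth[of ?x k a b' 1] xt P0(4) by simp
    consider "length b' < length b0" | "length b' = length b0" | "length b0 < length b'" by linarith
    then show False
    proof cases
      case 1
      have "take (length b' + 1) b0 = take (length b' + 1) (take (length b0) ?x)" using P0(1) by simp
      also have "\<dots> = b' @ [1]" using 1 xt by (simp add: min_def)
      finally have tb: "take (length b' + 1) b0 = b' @ [1]" .
      from b0 obtain u where u: "u \<in> elemA k a" "take (length b0 + 1) u = b0 @ [1]" "phi u"
        unfolding bad_def nonempty_def by auto
      have "take (length b' + 1) u = take (length b' + 1) (take (length b0 + 1) u)" using 1 by simp
      also have "\<dots> = take (length b' + 1) b0" using u(2) 1 by simp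
      finally have "take (length b' + 1) u = b' @ [1]" using tb by simp
      then have "nonempty k a phi (b'@[1])" using u unfolding nonempty_def by auto
      then show False using nn by simp
    next
      case 2
      then show False using xb1 P0(2) bad_mu[OF inv(1) b0] by simp
    next
      case 3
      then show False using xb1 P0(3) lb by simp
    qed
  qed
  have bb: "bad k a c phi b'" using pre lb aa ne1 ncm unfolding bad_def by simp
  note P = path[OF k2 apos amono c3 ca inv bb]
  have sm: "s \<le> mu k a phi b'" using G bb by simp
  have "\<forall>i<mu k a phi b' + 1. nonempty k a ?p (b'@[i])"
  proof (intro allI impI)
    fix i assume i: "i < mu k a phi b' + 1"
    show "nonempty k a ?p (b'@[i])"
    proof (cases "i < mu k a phi b'")
      case True
      then have "nonempty k a phi (b'@[i])" unfolding mu_def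
        using not_less_Least[of i "\<lambda>i. \<not> nonempty k a phi (b'@[i])"] by simp
      then show ?thesis unfolding next_empty_eq by (rule ne_mono)
    next
      case False
      then have ii: "i = ?x ! length b'" using i P(2) by simp
      have "take (length b' + 1) ?x = b' @ [?x ! length b']"
        using P(1) lb lx by (simp add: take_Suc_conv_app_nth)
      then show ?thesis using P(4) ii unfolding nonempty_def next_empty_eq by (intro bexI[of _ ?x]) auto
    qed
  qed
  then have "mu k a phi b' + 1 \<le> mu k a ?p b'" unfolding mu_def using least_ge[OF ex_empty] by blast
  then show ?thesis using sm by simp
qed

lemma inv_pres: "A1 k a phi \<and> HH k a phi \<Longrightarrow> A1 k a (next_empty k a phi) \<and> HH k a (next_empty k a phi)"
  using A1_pres[OF k2] HH_pres[OF k2] apos ca c3 k2 by auto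

lemma main: "\<forall>phi s. A1 k a phi \<and> HH k a phi \<and> (\<forall>b. bad k a c phi b \<longrightarrow> s \<le> mu k a phi b) \<and> c \<le> s + r \<longrightarrow>
   (\<exists>j\<le>r. (\<forall>i<j. \<not> full k a ((next_empty k a ^^ i) phi) []) \<and> Kc_connected k a c ((next_empty k a ^^ j) phi))"
proof (induction r)
  case 0
  show ?case
  proof (intro allI impI)
    fix phi s assume h: "A1 k a phi \<and> HH k a phi \<and> (\<forall>b. bad k a c phi b \<longrightarrow> s \<le> mu k a phi b) \<and> c \<le> s + 0"
    have "\<not> (\<exists>b. bad k a c phi b)"
    proof
      assume "\<exists>b. bad k a c phi b"
      then obtain b where "bad k a c phi b" by blast
      then show False using h bad_mu[of phi b] by fastforce
    qed
    then show "\<exists>j\<le>0. (\<forall>i<j. \<not> full k a ((next_empty k a ^^ i) phi) []) \<and> Kc_connected k a c ((next_empty k a ^^ j) phi)"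
      using Kc_bad by (intro exI[of _ 0]) auto
  qed
next
  case (Suc r)
  show ?case
  proof (intro allI impI)
    fix phi s assume h: "A1 k a phi \<and> HH k a phi \<and> (\<forall>b. bad k a c phi b \<longrightarrow> s \<le> mu k a phi b) \<and> c \<le> s + Suc r"
    show "\<exists>j\<le>Suc r. (\<forall>i<j. \<not> full k a ((next_empty k a ^^ i) phi) []) \<and> Kc_connected k a c ((next_empty k a ^^ j) phi)"
    proof (cases "\<exists>b. bad k a c phi b")
      case False
      then show ?thesis using Kc_bad by (intro exI[of _ 0]) auto
    next
      case True
      then obtain b0 where b0: "bad k a c phi b0" by blast
      let ?p = "next_empty k a phi"
      have ip: "A1 k a ?p \<and> HH k a ?p" using inv_pres h by blast
      have gp: "\<forall>b. bad k a c ?p b \<longrightarrow> s + 1 \<le> mu k a ?p b" using step h b0 by blast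
      from Suc.IH ip gp h obtain j where j: "j \<le> r" "\<forall>i<j. \<not> full k a ((next_empty k a ^^ i) ?p) []"
        "Kc_connected k a c ((next_empty k a ^^ j) ?p)" by (metis add_Suc_shift Suc_eq_plus1)
      have nf0: "\<not> full k a phi []" using bad_notfull b0 by blast
      show ?thesis
      proof (intro exI[of _ "Suc j"] conjI allI impI)
        show "Suc j \<le> Suc r" using j by simp
        fix i assume "i < Suc j"
        then show "\<not> full k a ((next_empty k a ^^ i) phi) []"
          using j(2) nf0 by (cases i) (auto simp: funpow_Suc_right simp del: funpow.simps)
      next
        show "Kc_connected k a c ((next_empty k a ^^ Suc j) phi)"
          using j(3) by (simp add: funpow_Suc_right del: funpow.simps)
      qed
    qed
  qed
qed

end



lemma inv_iter: assumes "2 \<le> k" "0 < a 2"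
  shows "A1 k a ((next_empty k a ^^ n) (\<lambda>_. False)) \<and> HH k a ((next_empty k a ^^ n) (\<lambda>_. False))"
  by (induction n) (simp_all add: inv_zero A1_pres[of k a, OF assms] HH_pres[of k a, OF assms(1)])

theorem corollary2:
  fixes k c :: nat and a :: "nat \<Rightarrow> nat" and phi :: "nat list \<Rightarrow> bool"
  assumes "2 \<le> k"
    and "\<forall>i. 2 \<le> i \<and> i \<le> k \<longrightarrow> 0 < a i"
    and "\<forall>i. 2 < i \<and> i \<le> k \<longrightarrow> a 2 \<le> a i"
    and "0 < c" and "c \<le> a 2"
    and "partial_listing k a phi"
  shows "\<exists>j \<le> c - 2.
           (\<forall>i < j. \<not> full k a ((next_empty k a ^^ i) phi) []) \<and>
           Kc_connected k a c ((next_empty k a ^^ j) phi)"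
proof -
  have a2: "0 < a 2" using assms(4,5) by simp
  from assms(6) obtain n where n: "phi = (next_empty k a ^^ n) (\<lambda>_. False)" unfolding partial_listing_def by blast
  have inv: "A1 k a phi" "HH k a phi" using inv_iter[of k a, OF assms(1) a2] n by auto
  show ?thesis
  proof (cases "3 \<le> c")
    case True
    have G: "\<forall>b. bad k a c phi b \<longrightarrow> 2 \<le> mu k a phi b"
      using bad_mu[OF assms(1,2,3) True assms(5) inv(1)] by blast
    have "c \<le> 2 + (c - 2)" by simp
    with main[OF assms(1,2,3) True assms(5), of "c - 2"] inv G show ?thesis by blast
  next
    case False
    then have "c = 1 \<or> c = 2" using assms(4) by auto
    then have "Kc_connected k a c phi" using inv(1) unfolding Kc_connected_def A1_def by auto
    then show ?thesis by (intro exI[of _ 0]) auto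
  qed
qed


end
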